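(* Let $R$ be a ring with $|R|\geq 2$, regarded also as a semiring. The following are equivalent: (1) $R$ is ideal-simple as a ring (its only ring ideals are $\{0\}$ and $R$); (2) $R$ is ideal-free as a semiring; (3) $R$ is $k$-simple as a semiring; (4) $R$ is congruence-simple as a ring; (5) $R$ is congruence-simple as a semiring; (6) $R$ is $k$-congruence-simple as a semiring.
   Context: A semiring $(R,+,\cdot)$ is a set with two binary operations such that $(R,+)$ is a commutative semigroup, $(R,\cdot)$ is a semigroup, and multiplication distributes over addition from both sides. A zero of $R$ is an element $0$ with $0+r=r$ and $0r=r0=0$ for all $r$. A (semiring) ideal of $R$ is a nonempty subset $A\subseteq R$ with $a+b\in A$ and $ra,ar\in A$ for all $a,b\in A$, $r\in R$; the trivial ideals are $R$ and $\{0\}$ (when a zero exists). $R$ is ideal-free if it has no nontrivial semiring ideals. For an ideal $A$, its $k$-closure is $\overline{A}=\{x\in R\mid x+a=b \text{ for some } a,b\in A\}$, and $A$ is a $k$-ideal if $A=\overline{A}$; $R$ is $k$-simple if it has no nontrivial $k$-ideals. A congruence on $R$ (as semiring) is an equivalence relation $\equiv$ with $a\equiv b$ implying $a+c\equiv b+c$, $ac\equiv bc$, $ca\equiv cb$; $R$ is congruence-simple (as a semiring, resp. as a ring with ring congruences) if it has exactly two congruences, namely $\mathrm{id}_R$ and $R\times R$. For an ideal $A$, $\kappa_A$ is the congruence defined by $x\,\kappa_A\,y$ iff $x+a=y+b$ for some $a,b\in A$; a congruence is a $k$-congruence if it equals $\kappa_A$ for some ideal $A$; $R$ is $k$-congruence-simple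 if it has no $k$-congruences other than $R\times R$ and $\mathrm{id}_R$. *)

theory Defs
  imports Main
begin

text \<open>The ring R is the whole type 'a of class ring (associative, not necessarily
unital). Viewed as a semiring, its zero is 0.\<close>

definition ring_ideal :: "'a::ring set \<Rightarrow> bool" where
  "ring_ideal A \<longleftrightarrow> A \<noteq> {} \<and> (\<forall>a\<in>A. \<forall>b\<in>A. a + b \<in> A) \<and> (\<forall>a\<in>A. - a \<in> A)
     \<and> (\<forall>a\<in>A. \<forall>r. r * a \<in> A \<and> a * r \<in> A)"

definition semiring_ideal :: "'a::semiring set \<Rightarrow> bool" where
  "semiring_ideal A \<longleftrightarrow> A \<noteq> {} \<and> (\<forall>a\<in>A. \<forall>b\<in>A. a + b \<in> A)
     \<and> (\<forall>a\<in>A. \<forall>r. r * a \<in> A \<and> a * r \<in> A)"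

definition k_closure :: "'a::semiring set \<Rightarrow> 'a set" where
  "k_closure A = {x. \<exists>a\<in>A. \<exists>b\<in>A. x + a = b}"

definition k_ideal :: "'a::semiring set \<Rightarrow> bool" where
  "k_ideal A \<longleftrightarrow> semiring_ideal A \<and> A = k_closure A"

definition semiring_congruence :: "('a::semiring \<times> 'a) set \<Rightarrow> bool" where
  "semiring_congruence r \<longleftrightarrow> equiv UNIV r \<and>
     (\<forall>a b c. (a, b) \<in> r \<longrightarrow> (a + c, b + c) \<in> r \<and> (a * c, b * c) \<in> r \<and> (c * a, c * b) \<in> r)"

definition ring_congruence :: "('a::ring \<times> 'a) set \<Rightarrow> bool" where
  "ring_congruence r \<longleftrightarrow> equiv UNIV r \<and>
     (\<forall>a b c. (a, b) \<in> r \<longrightarrow> (a + c, b + c) \<in> r \<and> (- a, - b) \<in> r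
        \<and> (a * c, b * c) \<in> r \<and> (c * a, c * b) \<in> r)"

definition kappa :: "'a::semiring set \<Rightarrow> ('a \<times> 'a) set" where
  "kappa A = {(x, y). \<exists>a\<in>A. \<exists>b\<in>A. x + a = y + b}"

definition ring_ideal_simple :: "'a::ring itself \<Rightarrow> bool" where
  "ring_ideal_simple _ \<longleftrightarrow> (\<forall>A::'a set. ring_ideal A \<longrightarrow> A = {0} \<or> A = UNIV)"

definition ideal_free :: "'a::semiring_0 itself \<Rightarrow> bool" where
  "ideal_free _ \<longleftrightarrow> (\<forall>A::'a set. semiring_ideal A \<longrightarrow> A = {0} \<or> A = UNIV)"

definition k_simple :: "'a::semiring_0 itself \<Rightarrow> bool" where
  "k_simple _ \<longleftrightarrow> (\<forall>A::'a set. k_ideal A \<longrightarrow> A = {0} \<or> A = UNIV)"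

definition ring_congruence_simple :: "'a::ring itself \<Rightarrow> bool" where
  "ring_congruence_simple _ \<longleftrightarrow> {r::('a \<times> 'a) set. ring_congruence r} = {Id, UNIV}"

definition semiring_congruence_simple :: "'a::semiring itself \<Rightarrow> bool" where
  "semiring_congruence_simple _ \<longleftrightarrow> {r::('a \<times> 'a) set. semiring_congruence r} = {Id, UNIV}"

definition k_congruence_simple :: "'a::semiring itself \<Rightarrow> bool" where
  "k_congruence_simple _ \<longleftrightarrow>
     (\<forall>A::'a set. semiring_ideal A \<longrightarrow> kappa A = Id \<or> kappa A = UNIV)"

end

theory Submission
  imports Defs
begin

lemma ring_ideal_zero: "ring_ideal (A::'a::ring set) \<Longrightarrow> 0 \<in> A"
  unfolding ring_ideal_def by (metis ex_in_conv mult_zero_left)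

lemma ring_ideal_diff: "ring_ideal (A::'a::ring set) \<Longrightarrow> a \<in> A \<Longrightarrow> b \<in> A \<Longrightarrow> a - b \<in> A"
  unfolding ring_ideal_def by (metis diff_conv_add_uminus)

lemma k_ideal_iff: "k_ideal (A::'a::ring set) \<longleftrightarrow> ring_ideal A"
proof
  assume k: "k_ideal A"
  hence s: "semiring_ideal A" and e: "A = k_closure A" by (auto simp: k_ideal_def)
  have z: "0 \<in> A" using s unfolding semiring_ideal_def by (metis ex_in_conv mult_zero_left)
  have "\<forall>a\<in>A. - a \<in> A"
  proof
    fix a assume "a \<in> A"
    hence "- a \<in> k_closure A" unfolding k_closure_def using z by force
    thus "- a \<in> A" using e by simp
  qed
  thus "ring_ideal A" using s unfolding semiring_ideal_def ring_ideal_def by blast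
next
  assume r: "ring_ideal A"
  have "k_closure A = A"
  proof
    show "k_closure A \<subseteq> A"
    proof
      fix x assume "x \<in> k_closure A"
      then obtain a b where "a \<in> A" "b \<in> A" "x + a = b" unfolding k_closure_def by blast
      hence "x = b - a" by (simp add: eq_diff_eq)
      thus "x \<in> A" using ring_ideal_diff[OF r] \<open>a\<in>A\<close> \<open>b\<in>A\<close> by simp
    qed
    show "A \<subseteq> k_closure A" unfolding k_closure_def using ring_ideal_zero[OF r] by force
  qed
  thus "k_ideal A" using r unfolding k_ideal_def semiring_ideal_def ring_ideal_def by auto
qed

lemma cong_iff: "semiring_congruence (r::('a::ring\<times>'a) set) \<longleftrightarrow> ring_congruence r"
proof
  assume s: "semiring_congruence r"
  have "(- a, - b) \<in> r" if "(a,b) \<in> r" for a b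
  proof -
    have "(a + (-a-b), b + (-a-b)) \<in> r" using s that unfolding semiring_congruence_def by blast
    hence "(-b, -a) \<in> r" by (simp add: algebra_simps)
    thus ?thesis using s unfolding semiring_congruence_def equiv_def by (meson symD)
  qed
  thus "ring_congruence r" using s unfolding semiring_congruence_def ring_congruence_def by blast
qed (auto simp: semiring_congruence_def ring_congruence_def)

definition cg :: "'a::ring set \<Rightarrow> ('a\<times>'a) set" where
  "cg I = {(x,y). x - y \<in> I}"

lemma cg_cong: assumes "ring_ideal I" shows "ring_congruence (cg I)"
proof -
  have z: "0 \<in> I" using ring_ideal_zero[OF assms] .
  have n: "\<And>a. a \<in> I \<Longrightarrow> -a \<in> I" and p: "\<And>a b. a \<in> I \<Longrightarrow> b \<in> I \<Longrightarrow> a + b \<in> I"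
    and m: "\<And>a c. a \<in> I \<Longrightarrow> c * a \<in> I \<and> a * c \<in> I"
    using assms unfolding ring_ideal_def by auto
  have s1: "y - x \<in> I" if "x - y \<in> I" for x y using n[OF that] by (simp add: algebra_simps)
  have s2: "x - z \<in> I" if "x - y \<in> I" "y - z \<in> I" for x y z
      using p[OF that] by (simp add: algebra_simps)
  have "equiv UNIV (cg I)"
  proof (rule equivI)
    show "refl (cg I)" by (rule reflI) (simp add: cg_def z)
    show "sym (cg I)" by (rule symI) (simp add: cg_def s1)
    show "trans (cg I)" by (rule transI) (unfold cg_def, blast intro: s2)
  qed simp
  moreover have "(a + c, b + c) \<in> cg I \<and> (- a, - b) \<in> cg I
        \<and> (a * c, b * c) \<in> cg I \<and> (c * a, c * b) \<in> cg I" if "(a,b) \<in> cg I" for a b c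
    using that n[of "a-b"] m[of "a-b" c] unfolding cg_def
    by (auto simp: algebra_simps)
  ultimately show ?thesis unfolding ring_congruence_def by blast
qed

lemma cg_Id: "ring_ideal I \<Longrightarrow> cg I = Id \<Longrightarrow> I = {0}"
  using ring_ideal_zero[of I] unfolding cg_def by (auto, metis (mono_tags) IdD case_prodI diff_0_right mem_Collect_eq)

lemma cg_UNIV: "cg I = UNIV \<Longrightarrow> I = UNIV"
  unfolding cg_def by (auto, metis (mono_tags) UNIV_I case_prodD diff_0_right mem_Collect_eq)

lemma cong_class:
  assumes r: "ring_congruence (r::('a::ring\<times>'a) set)"
  shows "ring_ideal {x. (x,0) \<in> r}" and "r = cg {x. (x,0) \<in> r}"
proof -
  have eq: "equiv UNIV r" and c: "\<And>a b c. (a,b)\<in>r \<Longrightarrow> (a + c, b + c) \<in> r \<and> (- a, - b) \<in> r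
        \<and> (a * c, b * c) \<in> r \<and> (c * a, c * b) \<in> r" using r unfolding ring_congruence_def by blast+
  have rf: "(x,x) \<in> r" for x using eq unfolding equiv_def refl_on_def by blast
  have tr: "(x,y)\<in>r \<Longrightarrow> (y,z)\<in>r \<Longrightarrow> (x,z)\<in>r" for x y z using eq unfolding equiv_def by (meson transD)
  show "ring_ideal {x. (x,0) \<in> r}"
    unfolding ring_ideal_def
  proof (intro conjI ballI allI)
    show "{x. (x, 0) \<in> r} \<noteq> {}" using rf by blast
  next
    fix a b assume "a \<in> {x. (x, 0) \<in> r}" "b \<in> {x. (x, 0) \<in> r}"
    hence "(a + b, 0 + b) \<in> r" "(b,0)\<in>r" using c[of a 0 b] by auto
    hence "(a + b, 0) \<in> r" using tr[of "a+b" b 0] by simp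
    thus "a + b \<in> {x. (x, 0) \<in> r}" by simp
  next
    fix a assume "a \<in> {x. (x, 0) \<in> r}"
    thus "- a \<in> {x. (x, 0) \<in> r}" using c[of a 0 0] by simp
  next
    fix a s assume "a \<in> {x. (x, 0) \<in> r}"
    thus "s * a \<in> {x. (x, 0) \<in> r}" "a * s \<in> {x. (x, 0) \<in> r}" using c[of a 0 s] by simp_all
  qed
  show "r = cg {x. (x,0) \<in> r}"
  proof (auto simp: cg_def)
    fix a b assume "(a,b) \<in> r"
    thus "(a - b, 0) \<in> r" using c[of a b "-b"] by simp
  next
    fix a b assume "(a - b, 0) \<in> r"
    thus "(a, b) \<in> r" using c[of "a-b" 0 b] by simp
  qed
qed

lemma Id_cong: "ring_congruence (Id::('a::ring\<times>'a) set)"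
  unfolding ring_congruence_def by (auto simp: equiv_def refl_on_def sym_def trans_def)

lemma UNIV_cong: "ring_congruence (UNIV::('a::ring\<times>'a) set)"
  unfolding ring_congruence_def by (auto simp: equiv_def refl_on_def sym_def trans_def)

lemma rcs: "ring_congruence_simple TYPE('a::ring) \<longleftrightarrow> ring_ideal_simple TYPE('a)"
proof
  assume s: "ring_congruence_simple TYPE('a)"
  show "ring_ideal_simple TYPE('a)" unfolding ring_ideal_simple_def
  proof (intro allI impI)
    fix A :: "'a set" assume a: "ring_ideal A"
    have "cg A \<in> {r. ring_congruence r}" using cg_cong[OF a] by simp
    hence "cg A = Id \<or> cg A = UNIV" using s unfolding ring_congruence_simple_def by blast
    thus "A = {0} \<or> A = UNIV" using cg_Id[OF a] cg_UNIV by blast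
  qed
next
  assume s: "ring_ideal_simple TYPE('a)"
  have "ring_congruence r \<Longrightarrow> r = Id \<or> r = UNIV" for r :: "('a\<times>'a) set"
  proof -
    assume r: "ring_congruence r"
    note cl = cong_class[OF r]
    have "{x. (x,0)\<in>r} = {0} \<or> {x. (x,0)\<in>r} = UNIV" using s cl(1) unfolding ring_ideal_simple_def by blast
    moreover have "cg {0::'a} = Id" by (auto simp: cg_def)
    moreover have "cg (UNIV::'a set) = UNIV" by (auto simp: cg_def)
    ultimately show ?thesis using cl(2) by metis
  qed
  thus "ring_congruence_simple TYPE('a)" unfolding ring_congruence_simple_def
    using Id_cong UNIV_cong by blast
qed

lemma scs: "semiring_congruence_simple TYPE('a::ring) \<longleftrightarrow> ring_congruence_simple TYPE('a)"
  unfolding semiring_congruence_simple_def ring_congruence_simple_def cong_iff ..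

lemma ks: "k_simple TYPE('a::ring) \<longleftrightarrow> ring_ideal_simple TYPE('a)"
  unfolding k_simple_def ring_ideal_simple_def k_ideal_iff ..

definition dd :: "'a::ring set \<Rightarrow> 'a set" where
  "dd A = {x. \<exists>a\<in>A. \<exists>b\<in>A. x = a - b}"

lemma dd_ideal: assumes "semiring_ideal A" shows "ring_ideal (dd A)"
proof -
  have p: "\<And>a b. a \<in> A \<Longrightarrow> b \<in> A \<Longrightarrow> a + b \<in> A"
    and m: "\<And>a c. a \<in> A \<Longrightarrow> c * a \<in> A \<and> a * c \<in> A" and ne: "A \<noteq> {}"
    using assms unfolding semiring_ideal_def by auto
  show ?thesis unfolding ring_ideal_def dd_def
  proof (intro conjI ballI allI)
    show "{x. \<exists>a\<in>A. \<exists>b\<in>A. x = a - b} \<noteq> {}" using ne by blast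
  next
    fix x y assume "x \<in> {x. \<exists>a\<in>A. \<exists>b\<in>A. x = a - b}" "y \<in> {x. \<exists>a\<in>A. \<exists>b\<in>A. x = a - b}"
    then obtain a b c d where "a\<in>A" "b\<in>A" "c\<in>A" "d\<in>A" "x = a - b" "y = c - d" by blast
    thus "x + y \<in> {x. \<exists>a\<in>A. \<exists>b\<in>A. x = a - b}"
    proof -
      have "x + y = (a + c) - (b + d)" using \<open>x = a - b\<close> \<open>y = c - d\<close> by (simp add: algebra_simps)
      thus ?thesis using p[of a c] p[of b d] \<open>a\<in>A\<close> \<open>b\<in>A\<close> \<open>c\<in>A\<close> \<open>d\<in>A\<close> by blast
    qed
  next
    fix x assume "x \<in> {x. \<exists>a\<in>A. \<exists>b\<in>A. x = a - b}"
    then obtain a b where "a\<in>A" "b\<in>A" "x = a - b" by blast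
    thus "-x \<in> {x. \<exists>a\<in>A. \<exists>b\<in>A. x = a - b}" by auto
  next
    fix x r assume "x \<in> {x. \<exists>a\<in>A. \<exists>b\<in>A. x = a - b}"
    then obtain a b where ab: "a\<in>A" "b\<in>A" "x = a - b" by blast
    show "r * x \<in> {x. \<exists>a\<in>A. \<exists>b\<in>A. x = a - b}"
      using ab m[of a r] m[of b r] by (auto simp: algebra_simps)
    show "x * r \<in> {x. \<exists>a\<in>A. \<exists>b\<in>A. x = a - b}"
      using ab m[of a r] m[of b r] by (auto simp: algebra_simps)
  qed
qed

lemma kappa_dd: "kappa A = cg (dd A)"
  unfolding kappa_def cg_def dd_def
  by (auto simp: algebra_simps)

lemma kcs: "k_congruence_simple TYPE('a::ring) \<longleftrightarrow> ring_ideal_simple TYPE('a)"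
proof
  assume s: "k_congruence_simple TYPE('a)"
  show "ring_ideal_simple TYPE('a)" unfolding ring_ideal_simple_def
  proof (intro allI impI)
    fix A :: "'a set" assume a: "ring_ideal A"
    have sa: "semiring_ideal A" using a unfolding ring_ideal_def semiring_ideal_def by blast
    have "dd A = A" unfolding dd_def using ring_ideal_diff[OF a] ring_ideal_zero[OF a] by force
    hence "kappa A = cg A" using kappa_dd by metis
    hence "cg A = Id \<or> cg A = UNIV" using s sa unfolding k_congruence_simple_def by metis
    thus "A = {0} \<or> A = UNIV" using cg_Id[OF a] cg_UNIV by blast
  qed
next
  assume s: "ring_ideal_simple TYPE('a)"
  show "k_congruence_simple TYPE('a)" unfolding k_congruence_simple_def
  proof (intro allI impI)
    fix A :: "'a set" assume "semiring_ideal A"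
    hence "ring_ideal (dd A)" by (rule dd_ideal)
    hence "dd A = {0} \<or> dd A = UNIV" using s unfolding ring_ideal_simple_def by blast
    moreover have "cg {0::'a} = Id" by (auto simp: cg_def)
    moreover have "cg (UNIV::'a set) = UNIV" by (auto simp: cg_def)
    ultimately show "kappa A = Id \<or> kappa A = UNIV" using kappa_dd by metis
  qed
qed


fun nm :: "nat \<Rightarrow> 'a::ring \<Rightarrow> 'a" where
  "nm 0 a = 0" | "nm (Suc n) a = a + nm n a"

lemma nm_add: "nm (m + n) a = nm m a + nm n a"
  by (induction m) (auto simp: algebra_simps)

lemma nm_in: "semiring_ideal A \<Longrightarrow> 0 \<in> A \<Longrightarrow> a \<in> A \<Longrightarrow> nm n a \<in> A"
  by (induction n) (auto simp: semiring_ideal_def)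

lemma nm_zero: assumes "nm p a = nm q a" "p > q" shows "\<exists>k. nm (Suc k) a = 0"
proof -
  obtain k where k: "p = Suc (q + k)" using assms(2) less_iff_Suc_add by blast
  hence "p = Suc k + q" by simp
  hence "nm (Suc k) a + nm q a = nm q a" using assms(1) nm_add by metis
  thus ?thesis by auto
qed

lemma ifree: "ideal_free TYPE('a::ring) \<longleftrightarrow> ring_ideal_simple TYPE('a)"
proof
  assume "ideal_free TYPE('a)"
  thus "ring_ideal_simple TYPE('a)"
    unfolding ideal_free_def ring_ideal_simple_def ring_ideal_def semiring_ideal_def by blast
next
  assume s: "ring_ideal_simple TYPE('a)"
  show "ideal_free TYPE('a)" unfolding ideal_free_def
  proof (intro allI impI)
    fix A :: "'a set" assume A: "semiring_ideal A"
    have p: "\<And>a b. a \<in> A \<Longrightarrow> b \<in> A \<Longrightarrow> a + b \<in> A"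
      and m: "\<And>a c. a \<in> A \<Longrightarrow> c * a \<in> A \<and> a * c \<in> A" and ne: "A \<noteq> {}"
      using A unfolding semiring_ideal_def by auto
    have z: "0 \<in> A" using ne m by (metis ex_in_conv mult_zero_left)
    define B where "B = {x\<in>A. -x \<in> A}"
    have "ring_ideal B" unfolding ring_ideal_def B_def
    proof (intro conjI ballI allI)
      show "{x \<in> A. - x \<in> A} \<noteq> {}" using z by auto
    next
      fix x y assume "x \<in> {x \<in> A. - x \<in> A}" "y \<in> {x \<in> A. - x \<in> A}"
      moreover have "- (x + y) = -x + -y" by (simp add: algebra_simps)
      ultimately show "x + y \<in> {x \<in> A. - x \<in> A}" using p[of x y] p[of "-x" "-y"] by auto
    next
      fix x assume "x \<in> {x \<in> A. - x \<in> A}" thus "- x \<in> {x \<in> A. - x \<in> A}" by simp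
    next
      fix x r assume "x \<in> {x \<in> A. - x \<in> A}"
      thus "r * x \<in> {x \<in> A. - x \<in> A}" "x * r \<in> {x \<in> A. - x \<in> A}"
        using m[of x r] m[of "-x" r] by auto
    qed
    hence "B = {0} \<or> B = UNIV" using s unfolding ring_ideal_simple_def by blast
    moreover have "B = UNIV \<Longrightarrow> A = UNIV" unfolding B_def by blast
    moreover have "A = {0}" if B0: "B = {0}"
    proof (rule ccontr)
      assume "A \<noteq> {0}"
      then obtain a where a: "a \<in> A" "a \<noteq> 0" using z by blast
      have prod0: "r * x = 0 \<and> x * r = 0" if "x \<in> A" for x r
      proof -
        have "r * x \<in> B" "x * r \<in> B" unfolding B_def
          using m[OF that, of r] m[OF that, of "-r"] by auto
        thus ?thesis using B0 by auto
      qed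
      define C where "C = {x::'a. \<forall>r. r * x = 0 \<and> x * r = 0}"
      have cI: "ring_ideal C" unfolding ring_ideal_def C_def
      proof (intro conjI ballI allI)
        have "(0::'a) \<in> {x::'a. \<forall>r. r * x = 0 \<and> x * r = 0}" by simp
        thus "{x::'a. \<forall>r. r * x = 0 \<and> x * r = 0} \<noteq> {}" by blast
      next
        fix x y assume "x \<in> {x::'a. \<forall>r. r * x = 0 \<and> x * r = 0}" "y \<in> {x::'a. \<forall>r. r * x = 0 \<and> x * r = 0}"
        thus "x + y \<in> {x::'a. \<forall>r. r * x = 0 \<and> x * r = 0}" by (simp add: distrib_left distrib_right)
      next
        fix x assume "x \<in> {x::'a. \<forall>r. r * x = 0 \<and> x * r = 0}"
        thus "-x \<in> {x::'a. \<forall>r. r * x = 0 \<and> x * r = 0}" by simp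
      next
        fix x r assume x: "x \<in> {x::'a. \<forall>r. r * x = 0 \<and> x * r = 0}"
        show "r * x \<in> {x::'a. \<forall>r. r * x = 0 \<and> x * r = 0}"
        proof (simp, intro allI conjI)
          fix t show "t * (r * x) = 0" using x by (simp add: mult.assoc[symmetric])
          show "r * x * t = 0" using x by (simp add: mult.assoc)
        qed
        show "x * r \<in> {x::'a. \<forall>r. r * x = 0 \<and> x * r = 0}"
        proof (simp, intro allI conjI)
          fix t show "t * (x * r) = 0" using x by (simp add: mult.assoc[symmetric])
          show "x * r * t = 0" using x by (simp add: mult.assoc)
        qed
      qed
      moreover have "a \<in> C" using prod0 a unfolding C_def by blast
      ultimately have "C = {0} \<or> C = UNIV" using s unfolding ring_ideal_simple_def by blast
      moreover have "C \<noteq> {0}" using \<open>a \<in> C\<close> a(2) by blast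
      ultimately have "C = UNIV" by blast
      hence all0: "x * y = 0" for x y :: 'a unfolding C_def by blast
      define G where "G = {x. \<exists>n k. x = nm (2*n) a - nm (2*k) a}"
      have "ring_ideal G" unfolding ring_ideal_def
      proof (intro conjI ballI allI)
        show "G \<noteq> {}" unfolding G_def by blast
      next
        fix x y assume "x \<in> G" "y \<in> G"
        then obtain n k n' k' where xe: "x = nm (2*n) a - nm (2*k) a" and ye: "y = nm (2*n') a - nm (2*k') a"
          unfolding G_def by blast
        have "x + y = (nm (2*n) a + nm (2*n') a) - (nm (2*k) a + nm (2*k') a)"
          unfolding xe ye by (simp add: algebra_simps)
        also have "\<dots> = nm (2*(n+n')) a - nm (2*(k+k')) a"
          by (simp only: distrib_left nm_add)
        finally have "x + y = nm (2*(n+n')) a - nm (2*(k+k')) a" .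
        thus "x + y \<in> G" unfolding G_def by blast
      next
        fix x assume "x \<in> G"
        then obtain n k where "x = nm (2*n) a - nm (2*k) a" unfolding G_def by blast
        hence "-x = nm (2*k) a - nm (2*n) a" by simp
        thus "-x \<in> G" unfolding G_def by blast
      next
        have "0 \<in> G" unfolding G_def by (rule CollectI, rule exI[of _ 0], rule exI[of _ 0], simp)
        fix x r show "r * x \<in> G" "x * r \<in> G" using all0 \<open>0 \<in> G\<close> by simp_all
      qed
      hence "G = {0} \<or> G = UNIV" using s unfolding ring_ideal_simple_def by blast
      moreover have "- a \<in> A \<Longrightarrow> False" using a B0 unfolding B_def by auto
      moreover have "G = {0} \<Longrightarrow> - a \<in> A"
      proof -
        assume "G = {0}"
        moreover have "nm (2*1) a - nm (2*0) a \<in> G" unfolding G_def by blast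
        ultimately have "a + a = 0" by (simp add: numeral_2_eq_2)
        hence "-a = a" by (simp only: neg_eq_iff_add_eq_0)
        thus "-a \<in> A" using a by simp
      qed
      moreover have "G = UNIV \<Longrightarrow> - a \<in> A"
      proof -
        assume "G = UNIV"
        then obtain n k where "a = nm (2*n) a - nm (2*k) a" unfolding G_def by blast
        hence e: "nm (Suc (2*k)) a = nm (2*n) a" by (simp add: algebra_simps)
        have "Suc (2*k) \<noteq> 2*n" by (rule Suc_double_not_eq_double)
        hence "\<exists>j. nm (Suc j) a = 0"
          using e nm_zero[OF e] nm_zero[OF e[symmetric]] by (meson nat_neq_iff)
        then obtain j where "nm (Suc j) a = 0" by blast
        hence "a + nm j a = 0" by simp
        hence "-a = nm j a" by (simp only: neg_eq_iff_add_eq_0)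
        thus "-a \<in> A" using nm_in[OF A z a(1)] by simp
      qed
      ultimately show False by blast
    qed
    ultimately show "A = {0} \<or> A = UNIV" by blast
  qed
qed

theorem corollary4p5:
  assumes "\<exists>x y :: 'a::ring. x \<noteq> y"
  shows "(ring_ideal_simple TYPE('a) \<longleftrightarrow> ideal_free TYPE('a))
       \<and> (ring_ideal_simple TYPE('a) \<longleftrightarrow> k_simple TYPE('a))
       \<and> (ring_ideal_simple TYPE('a) \<longleftrightarrow> ring_congruence_simple TYPE('a))
       \<and> (ring_ideal_simple TYPE('a) \<longleftrightarrow> semiring_congruence_simple TYPE('a))
       \<and> (ring_ideal_simple TYPE('a) \<longleftrightarrow> k_congruence_simple TYPE('a))"
  using ks[where 'a='a] rcs[where 'a='a] scs[where 'a='a] kcs[where 'a='a] ifree[where 'a='a] by simp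
end
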